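(* Let $\epsilon\in(0,1)$ and for $i=2,\dots,n$ let $0<p_i<q_i<+\infty$; write $(p,q)=(p_2,q_2)\times\cdots\times(p_n,q_n)$ and let $\psi:(0,\epsilon)\times(p,q)\to\mathbb{R}^n$, $\psi(t)=(t_1,t_1^{t_2},\dots,t_1^{t_n})$. Let $\beta\in\mathbb{Q}^n\setminus\{0\}$ be such that $\psi(t)^\beta=\prod_{i}\psi_i(t)^{\beta_i}$ is bounded on $(0,\epsilon)\times(p,q)$. Then there exist $p_i\le p'_i<q'_i\le q_i$ ($i=2,\dots,n$) such that, with $(p',q')=\prod_{i=2}^n(p'_i,q'_i)$, $\psi(t)^\beta\to0$ as $t_1\to0$ uniformly in $(t_2,\dots,t_n)\in(p',q')$. *)

theory Defs
  imports "HOL-Analysis.Analysis"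
begin

definition psi :: "real \<Rightarrow> (nat \<Rightarrow> real) \<Rightarrow> nat \<Rightarrow> real" where
  "psi t1 s i = (if i = 1 then t1 else t1 powr s i)"

definition psi_mono :: "nat \<Rightarrow> (nat \<Rightarrow> rat) \<Rightarrow> real \<Rightarrow> (nat \<Rightarrow> real) \<Rightarrow> real" where
  "psi_mono n \<beta> t1 s = (\<Prod>i\<in>{1..n}. psi t1 s i powr real_of_rat (\<beta> i))"

definition box_set :: "nat \<Rightarrow> (nat \<Rightarrow> real) \<Rightarrow> (nat \<Rightarrow> real) \<Rightarrow> (nat \<Rightarrow> real) set" where
  "box_set n p q = {s. \<forall>i\<in>{2..n}. p i < s i \<and> s i < q i}"

end

theory Submission
  imports Defs
begin

definition LL :: "nat \<Rightarrow> (nat \<Rightarrow> rat) \<Rightarrow> (nat \<Rightarrow> real) \<Rightarrow> real" where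
  "LL n \<beta> s = real_of_rat (\<beta> 1) + (\<Sum>i\<in>{2..n}. real_of_rat (\<beta> i) * s i)"

lemma psi_mono_eq:
  assumes "1 \<le> n" "0 < t1"
  shows "psi_mono n \<beta> t1 s = t1 powr LL n \<beta> s"
proof -
  have e: "{1..n} = insert 1 {2..n}" using assms by auto
  have "psi_mono n \<beta> t1 s = t1 powr real_of_rat (\<beta> 1) *
      (\<Prod>i\<in>{2..n}. t1 powr (real_of_rat (\<beta> i) * s i))"
    unfolding psi_mono_def e
    by (simp add: psi_def powr_powr mult.commute)
  also have "(\<Prod>i\<in>{2..n}. t1 powr (real_of_rat (\<beta> i) * s i)) =
      t1 powr (\<Sum>i\<in>{2..n}. real_of_rat (\<beta> i) * s i)"
    using assms by (simp add: powr_sum)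
  finally show ?thesis unfolding LL_def using assms by (simp add: powr_add)
qed

lemma nonneg_L:
  assumes "0 < \<epsilon>" "1 \<le> n"
    and M: "\<forall>t1\<in>{0<..<\<epsilon>}. \<forall>s\<in>box_set n p q. \<bar>psi_mono n \<beta> t1 s\<bar> \<le> M"
    and s: "s \<in> box_set n p q"
  shows "LL n \<beta> s \<ge> 0"
proof (rule ccontr)
  assume "\<not> ?thesis"
  hence L: "LL n \<beta> s < 0" by simp
  define x where "x = (max M 1 + 1) powr (1 / LL n \<beta> s)"
  define t where "t = min (\<epsilon>/2) x"
  have xpos: "x > 0" unfolding x_def by simp
  have tpos: "t > 0" using xpos assms unfolding t_def by simp
  have tle: "t \<le> x" unfolding t_def by simp
  have tin: "t \<in> {0<..<\<epsilon>}" using tpos assms unfolding t_def by auto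
  have "x powr LL n \<beta> s = max M 1 + 1" unfolding x_def using L
    by (simp add: powr_powr)
  moreover have "x powr LL n \<beta> s \<le> t powr LL n \<beta> s"
    using tle tpos L by (intro powr_mono2') auto
  ultimately have "t powr LL n \<beta> s > M" by linarith
  moreover have "\<bar>t powr LL n \<beta> s\<bar> \<le> M"
    using M tin s psi_mono_eq[OF assms(2) tpos] by metis
  ultimately show False by simp
qed

theorem lemma4p4:
  fixes n :: nat and \<epsilon> :: real and p q :: "nat \<Rightarrow> real" and \<beta> :: "nat \<Rightarrow> rat"
  assumes "0 < \<epsilon>" and "\<epsilon> < 1"
    and "\<forall>i\<in>{2..n}. 0 < p i \<and> p i < q i"
    and "\<exists>i\<in>{1..n}. \<beta> i \<noteq> 0"
    and "\<exists>M. \<forall>t1\<in>{0<..<\<epsilon>}. \<forall>s\<in>box_set n p q. \<bar>psi_mono n \<beta> t1 s\<bar> \<le> M"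
  shows "\<exists>p' q'. (\<forall>i\<in>{2..n}. p i \<le> p' i \<and> p' i < q' i \<and> q' i \<le> q i) \<and>
           uniform_limit (box_set n p' q') (\<lambda>t1 s. psi_mono n \<beta> t1 s) (\<lambda>s. 0) (at_right 0)"
proof -
  obtain M where M: "\<forall>t1\<in>{0<..<\<epsilon>}. \<forall>s\<in>box_set n p q. \<bar>psi_mono n \<beta> t1 s\<bar> \<le> M"
    using assms(5) by blast
  have n1: "1 \<le> n" using assms(4) by auto
  define m where "m i = (p i + q i) / 2" for i
  have mbox: "m \<in> box_set n p q" using assms(3) unfolding box_set_def m_def by auto
  have Lm0: "LL n \<beta> m \<ge> 0" using nonneg_L[OF assms(1) n1 M mbox] .
  have Lmpos: "LL n \<beta> m > 0"
  proof (cases "\<exists>j\<in>{2..n}. \<beta> j \<noteq> 0")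
    case False
    obtain i where i: "i \<in> {1..n}" "\<beta> i \<noteq> 0" using assms(4) by blast
    have "i = 1"
    proof (rule ccontr)
      assume "i \<noteq> 1"
      hence "i \<in> {2..n}" using i(1) by auto
      thus False using False i(2) by blast
    qed
    hence b1: "\<beta> 1 \<noteq> 0" using i by simp
    have "(\<Sum>i\<in>{2..n}. real_of_rat (\<beta> i) * m i) = 0"
      using False by (intro sum.neutral) auto
    hence "LL n \<beta> m = real_of_rat (\<beta> 1)" unfolding LL_def by simp
    with b1 Lm0 show ?thesis by simp
  next
    case True
    then obtain j where j: "j \<in> {2..n}" "\<beta> j \<noteq> 0" by blast
    define d where "d = - sgn (real_of_rat (\<beta> j)) * (q j - p j) / 4"
    define m' where "m' i = m i + (if i = j then d else 0)" for i
    have pq: "p j < q j" using assms(3) j by auto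
    have dabs: "\<bar>d\<bar> < (q j - p j) / 2" using pq unfolding d_def
      by (simp add: abs_mult abs_sgn_eq)
    have "m' \<in> box_set n p q"
      unfolding box_set_def mem_Collect_eq
    proof (intro ballI)
      fix i assume i: "i \<in> {2..n}"
      show "p i < m' i \<and> m' i < q i"
      proof (cases "i = j")
        case True
        thus ?thesis using dabs unfolding m'_def m_def by (auto simp: field_simps abs_if split: if_splits)
      next
        case False
        thus ?thesis using mbox i unfolding m'_def box_set_def by simp
      qed
    qed
    hence "LL n \<beta> m' \<ge> 0" using nonneg_L[OF assms(1) n1 M] by blast
    moreover have "LL n \<beta> m' = LL n \<beta> m + real_of_rat (\<beta> j) * d"
    proof -
      have "(\<Sum>i\<in>{2..n}. real_of_rat (\<beta> i) * m' i) =
          (\<Sum>i\<in>{2..n}. real_of_rat (\<beta> i) * m i + (if i = j then real_of_rat (\<beta> i) * d else 0))"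
        unfolding m'_def by (intro sum.cong) (auto simp: algebra_simps)
      also have "\<dots> = (\<Sum>i\<in>{2..n}. real_of_rat (\<beta> i) * m i) + real_of_rat (\<beta> j) * d"
        using j by (simp add: sum.distrib)
      finally show ?thesis unfolding LL_def by simp
    qed
    moreover have "real_of_rat (\<beta> j) * d < 0"
      using j pq unfolding d_def
      by (cases "\<beta> j > 0") (auto simp: sgn_if mult_less_0_iff)
    ultimately show ?thesis by linarith
  qed
  define \<delta> where "\<delta> = LL n \<beta> m"
  define p' where "p' i = (if \<beta> i \<ge> 0 then m i else p i)" for i
  define q' where "q' i = (if \<beta> i \<ge> 0 then q i else m i)" for i
  have sub: "\<forall>i\<in>{2..n}. p i \<le> p' i \<and> p' i < q' i \<and> q' i \<le> q i"
    using assms(3) unfolding p'_def q'_def m_def by auto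
  have Lge: "LL n \<beta> s \<ge> \<delta>" if s: "s \<in> box_set n p' q'" for s
  proof -
    have "real_of_rat (\<beta> i) * m i \<le> real_of_rat (\<beta> i) * s i" if i: "i \<in> {2..n}" for i
    proof (cases "\<beta> i \<ge> 0")
      case True
      hence "m i \<le> s i" using s i unfolding box_set_def p'_def by force
      thus ?thesis using True by (intro mult_left_mono) auto
    next
      case False
      hence "s i \<le> m i" using s i unfolding box_set_def q'_def by force
      thus ?thesis using False by (intro mult_left_mono_neg) auto
    qed
    hence "(\<Sum>i\<in>{2..n}. real_of_rat (\<beta> i) * m i) \<le> (\<Sum>i\<in>{2..n}. real_of_rat (\<beta> i) * s i)"
      by (rule sum_mono)
    thus ?thesis unfolding \<delta>_def LL_def by simp
  qed
  have lim: "((\<lambda>t. t powr \<delta>) \<longlongrightarrow> 0) (at_right 0)"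
    using Lmpos unfolding \<delta>_def
    by (intro tendsto_zero_powrI)
       (auto intro: tendsto_ident_at eventually_mono[OF eventually_at_right_less])
  have "uniform_limit (box_set n p' q') (\<lambda>t1 s. psi_mono n \<beta> t1 s) (\<lambda>s. 0) (at_right 0)"
    unfolding uniform_limit_iff
  proof (intro allI impI)
    fix e :: real assume e: "e > 0"
    have ev1: "\<forall>\<^sub>F t in at_right 0. t powr \<delta> < e"
      using lim e by (simp add: order_tendstoD(2))
    have ev2: "\<forall>\<^sub>F t in at_right (0::real). 0 < t \<and> t < 1"
      unfolding eventually_at_right_field by (intro exI[of _ 1]) auto
    show "\<forall>\<^sub>F t in at_right 0. \<forall>s\<in>box_set n p' q'. dist (psi_mono n \<beta> t s) 0 < e"
      using ev1 ev2
    proof eventually_elim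
      case (elim t)
      show ?case
      proof
        fix s assume s: "s \<in> box_set n p' q'"
        have "psi_mono n \<beta> t s = t powr LL n \<beta> s" using psi_mono_eq[OF n1] elim by simp
        also have "\<dots> \<le> t powr \<delta>" using elim Lge[OF s] by (intro powr_mono') auto
        finally show "dist (psi_mono n \<beta> t s) 0 < e" using elim
          psi_mono_eq[OF n1, of t] by simp
      qed
    qed
  qed
  with sub show ?thesis by blast
qed

end
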